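(* Let $\mathbf C$ be an admissible category of lattices and $L$ a convergence $\mathbf C$-object. The map $\epsilon_L:L\to\mathbb P(\mathrm{pt}\,L)$, $\epsilon_L(\ell)=\ell^\bullet$, is a morphism in $\mathbf C^{\mathrm{conv}}$ and is final, i.e. $\lim_{\mathbb P(\mathrm{pt}\,L)}\mathcal F=\epsilon_L(\lim_L\epsilon_L^{-1}(\mathcal F))$ for every filter $\mathcal F$ of subsets of $\mathrm{pt}\,L$.
   Context: A filter on an inf-semilattice $L$ is a non-empty upward-closed subset closed under binary meets ($L$ itself allowed); $\mathbb F L$ is the set of filters. A category of lattices has lattices as objects and morphisms preserving finite suprema and infima; it is admissible if every powerset $\mathbb P(X)$ is an object and there are classes of index sets $\mathcal I,\mathcal J$ such that morphisms $L\to L'$ are exactly monotone maps preserving all existing $I$-indexed infima ($I\in\mathcal I$) and $J$-indexed suprema ($J\in\mathcal J$). A convergence $\mathbf C$-object is $(L,\lim_L)$ with $\lim_L:\mathbb F L\to L$ monotone; morphisms $\varphi:L\to L'$ of $\mathbf C^{\mathrm{conv}}$ are $\mathbf C$-morphisms with $\lim_{L'}\mathcal F\le\varphi(\lim_L\varphi^{-1}(\mathcal F))$ for all $\mathcal F\in\mathbb F L'$. With $\mathbb P(1)=\{\emptyset,\{*\}\}$ and $\lim_{\mathbb P(1)}$ constantly $\{*\}$, $\mathrm{pt}\,L$ is the set of $\mathbf C^{\mathrm{conv}}$-morphisms $L\to\mathbb P(1)$ and $\ell^\bullet=\{\psi\in\mathrm{pt}\,L:\psi(\ell)=\{*\}\}$.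 The powerset $\mathbb P(\mathrm{pt}\,L)$ carries $\lim_{\mathbb P(\mathrm{pt}\,L)}\mathcal F=(\lim_L\{\ell\in L:\ell^\bullet\in\mathcal F\})^\bullet$. *)

theory Defs
  imports Main
begin

text \<open>Lattices are handled relative to a carrier set A, ordered by the ambient
order of the type. For the convergence object L the carrier is UNIV of a type of
class lattice; for the powerset P(X) the carrier is Pow X ordered by inclusion;
P(1) is UNIV of type unit set.\<close>

definition is_lb_in :: "'a::order set \<Rightarrow> 'a set \<Rightarrow> 'a \<Rightarrow> bool" where
  "is_lb_in A S m \<longleftrightarrow> m \<in> A \<and> (\<forall>s\<in>S. m \<le> s)"

definition is_ub_in :: "'a::order set \<Rightarrow> 'a set \<Rightarrow> 'a \<Rightarrow> bool" where
  "is_ub_in A S m \<longleftrightarrow> m \<in> A \<and> (\<forall>s\<in>S. s \<le> m)"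

definition is_glb_in :: "'a::order set \<Rightarrow> 'a set \<Rightarrow> 'a \<Rightarrow> bool" where
  "is_glb_in A S m \<longleftrightarrow> is_lb_in A S m \<and> (\<forall>z. is_lb_in A S z \<longrightarrow> z \<le> m)"

definition is_lub_in :: "'a::order set \<Rightarrow> 'a set \<Rightarrow> 'a \<Rightarrow> bool" where
  "is_lub_in A S m \<longleftrightarrow> is_ub_in A S m \<and> (\<forall>z. is_ub_in A S z \<longrightarrow> m \<le> z)"

definition is_filter_in :: "'a::order set \<Rightarrow> 'a set \<Rightarrow> bool" where
  "is_filter_in A F \<longleftrightarrow> F \<subseteq> A \<and> F \<noteq> {}
     \<and> (\<forall>x\<in>F. \<forall>y\<in>A. x \<le> y \<longrightarrow> y \<in> F)
     \<and> (\<forall>x\<in>F. \<forall>y\<in>F. \<forall>m. is_glb_in A {x, y} m \<longrightarrow> m \<in> F)"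

definition preserves_inf_idx ::
  "'i set \<Rightarrow> 'a::order set \<Rightarrow> 'b::order set \<Rightarrow> ('a \<Rightarrow> 'b) \<Rightarrow> bool" where
  "preserves_inf_idx I A B \<phi> \<longleftrightarrow>
     (\<forall>x::'i \<Rightarrow> 'a. x ` I \<subseteq> A \<longrightarrow>
        (\<forall>m. is_glb_in A (x ` I) m \<longrightarrow> is_glb_in B ((\<lambda>i. \<phi> (x i)) ` I) (\<phi> m)))"

definition preserves_sup_idx ::
  "'i set \<Rightarrow> 'a::order set \<Rightarrow> 'b::order set \<Rightarrow> ('a \<Rightarrow> 'b) \<Rightarrow> bool" where
  "preserves_sup_idx I A B \<phi> \<longleftrightarrow>
     (\<forall>x::'i \<Rightarrow> 'a. x ` I \<subseteq> A \<longrightarrow>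
        (\<forall>m. is_lub_in A (x ` I) m \<longrightarrow> is_lub_in B ((\<lambda>i. \<phi> (x i)) ` I) (\<phi> m)))"

text \<open>Morphisms of the admissible category C determined by the index classes
II and JJ: monotone maps preserving finite suprema and infima (as required of
a category of lattices) and all existing I-indexed infima (I in II) and
J-indexed suprema (J in JJ).\<close>
definition C_mor ::
  "'i set set \<Rightarrow> 'j set set \<Rightarrow> 'a::order set \<Rightarrow> 'b::order set \<Rightarrow> ('a \<Rightarrow> 'b) \<Rightarrow> bool" where
  "C_mor II JJ A B \<phi> \<longleftrightarrow>
     \<phi> ` A \<subseteq> B
     \<and> (\<forall>x\<in>A. \<forall>y\<in>A. x \<le> y \<longrightarrow> \<phi> x \<le> \<phi> y)
     \<and> (\<forall>S. finite S \<longrightarrow> S \<subseteq> A \<longrightarrow> (\<forall>m. is_glb_in A S m \<longrightarrow> is_glb_in B (\<phi> ` S) (\<phi> m)))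
     \<and> (\<forall>S. finite S \<longrightarrow> S \<subseteq> A \<longrightarrow> (\<forall>m. is_lub_in A S m \<longrightarrow> is_lub_in B (\<phi> ` S) (\<phi> m)))
     \<and> (\<forall>I\<in>II. preserves_inf_idx I A B \<phi>)
     \<and> (\<forall>J\<in>JJ. preserves_sup_idx J A B \<phi>)"

definition conv_mor ::
  "'i set set \<Rightarrow> 'j set set \<Rightarrow> 'a::order set \<Rightarrow> ('a set \<Rightarrow> 'a)
     \<Rightarrow> 'b::order set \<Rightarrow> ('b set \<Rightarrow> 'b) \<Rightarrow> ('a \<Rightarrow> 'b) \<Rightarrow> bool" where
  "conv_mor II JJ A limA B limB \<phi> \<longleftrightarrow>
     C_mor II JJ A B \<phi>
     \<and> (\<forall>F. is_filter_in B F \<longrightarrow> limB F \<le> \<phi> (limA {l \<in> A. \<phi> l \<in> F}))"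

definition lim_P1 :: "unit set set \<Rightarrow> unit set" where
  "lim_P1 F = {()}"

definition pt :: "'i set set \<Rightarrow> 'j set set \<Rightarrow> ('a::lattice set \<Rightarrow> 'a) \<Rightarrow> ('a \<Rightarrow> unit set) set" where
  "pt II JJ limL = {\<psi>. conv_mor II JJ (UNIV::'a set) limL (UNIV::unit set set) lim_P1 \<psi>}"

definition bullet :: "'i set set \<Rightarrow> 'j set set \<Rightarrow> ('a::lattice set \<Rightarrow> 'a) \<Rightarrow> 'a \<Rightarrow> ('a \<Rightarrow> unit set) set" where
  "bullet II JJ limL l = {\<psi> \<in> pt II JJ limL. \<psi> l = {()}}"

definition lim_Ppt :: "'i set set \<Rightarrow> 'j set set \<Rightarrow> ('a::lattice set \<Rightarrow> 'a)
    \<Rightarrow> ('a \<Rightarrow> unit set) set set \<Rightarrow> ('a \<Rightarrow> unit set) set" where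
  "lim_Ppt II JJ limL F = bullet II JJ limL (limL {l. bullet II JJ limL l \<in> F})"

end

theory Submission
  imports Defs
begin

lemma unit_set_cases: "(u::unit set) = {} \<or> u = {()}"
  by auto

lemma u1: "{()} \<subseteq> (u::unit set) \<Longrightarrow> u = {()}" by auto

lemma glb_lift:
  fixes P :: "('a::order \<Rightarrow> unit set) set"
  assumes A: "\<forall>\<psi>\<in>P. is_glb_in UNIV (\<psi> ` T) (\<psi> m)"
  shows "is_glb_in (Pow P) ((\<lambda>l. {\<psi>\<in>P. \<psi> l = {()}}) ` T) {\<psi>\<in>P. \<psi> m = {()}}"
proof -
  let ?B = "\<lambda>l. {\<psi>\<in>P. \<psi> l = {()}}"
  have lb: "\<psi> s = {()}" if h: "\<psi> \<in> P" "\<psi> m = {()}" "s \<in> T" for \<psi> s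
  proof -
    have "is_glb_in UNIV (\<psi> ` T) (\<psi> m)" using A h(1) by (rule bspec)
    then have "\<forall>t\<in>\<psi> ` T. \<psi> m \<le> t" unfolding is_glb_in_def is_lb_in_def by (elim conjE)
    then have "\<psi> m \<le> \<psi> s" using h(3) by blast
    then show ?thesis using h(2) u1 by simp
  qed
  have gr: "\<psi> m = {()}" if h: "\<psi> \<in> P" "\<forall>s\<in>T. \<psi> s = {()}" for \<psi>
  proof -
    have g: "is_glb_in UNIV (\<psi> ` T) (\<psi> m)" using A h(1) by (rule bspec)
    have "is_lb_in UNIV (\<psi> ` T) {()}" unfolding is_lb_in_def using h(2) by auto
    then have "{()} \<le> \<psi> m" using g unfolding is_glb_in_def by (elim conjE) (erule allE, erule mp)
    then show ?thesis by (rule u1)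
  qed
  have 1: "is_lb_in (Pow P) (?B ` T) (?B m)"
    unfolding is_lb_in_def using lb by auto
  have 2: "z \<le> ?B m" if "is_lb_in (Pow P) (?B ` T) z" for z
  proof
    fix \<psi> assume "\<psi> \<in> z"
    have zP: "z \<subseteq> P" and zs: "\<forall>s\<in>T. z \<subseteq> ?B s" using that unfolding is_lb_in_def by auto
    then have "\<psi> \<in> P" "\<forall>s\<in>T. \<psi> s = {()}" using \<open>\<psi> \<in> z\<close> by blast+
    then show "\<psi> \<in> ?B m" using gr by blast
  qed
  show ?thesis unfolding is_glb_in_def using 1 2 by blast
qed

lemma lub_lift:
  fixes P :: "('a::order \<Rightarrow> unit set) set"
  assumes A: "\<forall>\<psi>\<in>P. is_lub_in UNIV (\<psi> ` T) (\<psi> m)"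
  shows "is_lub_in (Pow P) ((\<lambda>l. {\<psi>\<in>P. \<psi> l = {()}}) ` T) {\<psi>\<in>P. \<psi> m = {()}}"
proof -
  let ?B = "\<lambda>l. {\<psi>\<in>P. \<psi> l = {()}}"
  have ub: "\<psi> m = {()}" if h: "\<psi> \<in> P" "\<psi> s = {()}" "s \<in> T" for \<psi> s
  proof -
    have "is_lub_in UNIV (\<psi> ` T) (\<psi> m)" using A h(1) by (rule bspec)
    then have "\<forall>t\<in>\<psi> ` T. t \<le> \<psi> m" unfolding is_lub_in_def is_ub_in_def by (elim conjE)
    then have "\<psi> s \<le> \<psi> m" using h(3) by blast
    then show ?thesis using h(2) u1 by simp
  qed
  have le: "\<exists>s\<in>T. \<psi> s = {()}" if h: "\<psi> \<in> P" "\<psi> m = {()}" for \<psi>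
  proof (rule ccontr)
    assume "\<not> ?thesis"
    then have "\<forall>s\<in>T. \<psi> s = {}" using unit_set_cases by blast
    then have "is_ub_in UNIV (\<psi> ` T) {}" unfolding is_ub_in_def by auto
    moreover have g: "is_lub_in UNIV (\<psi> ` T) (\<psi> m)" using A h(1) by (rule bspec)
    ultimately have "\<psi> m \<le> {}" unfolding is_lub_in_def by (elim conjE) (erule allE, erule mp)
    then show False using h(2) by simp
  qed
  have 1: "is_ub_in (Pow P) (?B ` T) (?B m)"
    unfolding is_ub_in_def using ub by auto
  have 2: "?B m \<le> z" if "is_ub_in (Pow P) (?B ` T) z" for z
  proof
    fix \<psi> assume "\<psi> \<in> ?B m"
    have zs: "\<forall>s\<in>T. ?B s \<subseteq> z" using that unfolding is_ub_in_def by auto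
    obtain s where "s \<in> T" "\<psi> s = {()}" using le \<open>\<psi> \<in> ?B m\<close> by blast
    then have "\<psi> \<in> ?B s" using \<open>\<psi> \<in> ?B m\<close> by blast
    then show "\<psi> \<in> z" using zs \<open>s \<in> T\<close> by blast
  qed
  show ?thesis unfolding is_lub_in_def using 1 2 by blast
qed

lemma Cm_mono: "C_mor II JJ A B \<phi> \<Longrightarrow> x \<in> A \<Longrightarrow> y \<in> A \<Longrightarrow> x \<le> y \<Longrightarrow> \<phi> x \<le> \<phi> y"
proof -
  assume h: "C_mor II JJ A B \<phi>" and xy: "x \<in> A" "y \<in> A" "x \<le> y"
  have "\<forall>x\<in>A. \<forall>y\<in>A. x \<le> y \<longrightarrow> \<phi> x \<le> \<phi> y"
    using h unfolding C_mor_def by (elim conjE)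
  then show ?thesis using xy by blast
qed

lemma Cm_glb: "C_mor II JJ A B \<phi> \<Longrightarrow> finite S \<Longrightarrow> S \<subseteq> A \<Longrightarrow> is_glb_in A S m \<Longrightarrow> is_glb_in B (\<phi> ` S) (\<phi> m)"
proof -
  assume h: "C_mor II JJ A B \<phi>" and s: "finite S" "S \<subseteq> A" "is_glb_in A S m"
  have "\<forall>S. finite S \<longrightarrow> S \<subseteq> A \<longrightarrow> (\<forall>m. is_glb_in A S m \<longrightarrow> is_glb_in B (\<phi> ` S) (\<phi> m))"
    using h unfolding C_mor_def by (elim conjE)
  then show ?thesis using s by blast
qed

lemma Cm_lub: "C_mor II JJ A B \<phi> \<Longrightarrow> finite S \<Longrightarrow> S \<subseteq> A \<Longrightarrow> is_lub_in A S m \<Longrightarrow> is_lub_in B (\<phi> ` S) (\<phi> m)"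
proof -
  assume h: "C_mor II JJ A B \<phi>" and s: "finite S" "S \<subseteq> A" "is_lub_in A S m"
  have "\<forall>S. finite S \<longrightarrow> S \<subseteq> A \<longrightarrow> (\<forall>m. is_lub_in A S m \<longrightarrow> is_lub_in B (\<phi> ` S) (\<phi> m))"
    using h unfolding C_mor_def by (elim conjE)
  then show ?thesis using s by blast
qed

lemma Cm_inf: "C_mor II JJ A B \<phi> \<Longrightarrow> I \<in> II \<Longrightarrow> preserves_inf_idx I A B \<phi>"
proof -
  assume h: "C_mor II JJ A B \<phi>" and i: "I \<in> II"
  have "\<forall>I\<in>II. preserves_inf_idx I A B \<phi>"
    using h unfolding C_mor_def by (elim conjE)
  then show ?thesis using i by blast
qed

lemma Cm_sup: "C_mor II JJ A B \<phi> \<Longrightarrow> I \<in> JJ \<Longrightarrow> preserves_sup_idx I A B \<phi>"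
proof -
  assume h: "C_mor II JJ A B \<phi>" and i: "I \<in> JJ"
  have "\<forall>I\<in>JJ. preserves_sup_idx I A B \<phi>"
    using h unfolding C_mor_def by (elim conjE)
  then show ?thesis using i by blast
qed

theorem mainTheorem5:
  fixes II :: "'i set set" and JJ :: "'j set set"
    and limL :: "'a::lattice set \<Rightarrow> 'a"
  assumes lim_mono: "\<And>F G. is_filter_in (UNIV::'a set) F \<Longrightarrow> is_filter_in (UNIV::'a set) G
                        \<Longrightarrow> F \<subseteq> G \<Longrightarrow> limL F \<le> limL G"
  shows "conv_mor II JJ (UNIV::'a set) limL (Pow (pt II JJ limL)) (lim_Ppt II JJ limL)
            (bullet II JJ limL)
         \<and> (\<forall>F. is_filter_in (Pow (pt II JJ limL)) F \<longrightarrow>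
               lim_Ppt II JJ limL F = bullet II JJ limL (limL {l. bullet II JJ limL l \<in> F}))"
proof -
  let ?P = "pt II JJ limL"
  have bdef: "bullet II JJ limL = (\<lambda>l. {\<psi>\<in>?P. \<psi> l = {()}})"
    by (rule ext) (simp add: bullet_def)
  have cm: "\<psi> \<in> ?P \<Longrightarrow> C_mor II JJ (UNIV::'a set) (UNIV::unit set set) \<psi>" for \<psi>
    by (simp add: pt_def conv_mor_def)
  have mono: "\<psi> \<in> ?P \<Longrightarrow> x \<le> y \<Longrightarrow> \<psi> x \<le> \<psi> y" for \<psi> and x y :: 'a
    using cm[of \<psi>] Cm_mono by blast
  have fglb: "\<psi> \<in> ?P \<Longrightarrow> finite S \<Longrightarrow> is_glb_in UNIV S m \<Longrightarrow> is_glb_in UNIV (\<psi> ` S) (\<psi> m)" for \<psi> S m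
    using cm[of \<psi>] Cm_glb by blast
  have flub: "\<psi> \<in> ?P \<Longrightarrow> finite S \<Longrightarrow> is_lub_in UNIV S m \<Longrightarrow> is_lub_in UNIV (\<psi> ` S) (\<psi> m)" for \<psi> S m
    using cm[of \<psi>] Cm_lub by blast
  have iglb: "\<psi> \<in> ?P \<Longrightarrow> I \<in> II \<Longrightarrow> is_glb_in UNIV (x ` I) m \<Longrightarrow> is_glb_in UNIV (\<psi> ` (x ` I)) (\<psi> m)" for \<psi> I x m
  proof -
    assume a: "\<psi> \<in> ?P" "I \<in> II" "is_glb_in UNIV (x ` I) m"
    then have "preserves_inf_idx I UNIV UNIV \<psi>" using cm[of \<psi>] Cm_inf by blast
    then have "is_glb_in UNIV ((\<lambda>i. \<psi> (x i)) ` I) (\<psi> m)" using a(3) unfolding preserves_inf_idx_def by blast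
    then show ?thesis by (simp add: image_image)
  qed
  have ilub: "\<psi> \<in> ?P \<Longrightarrow> I \<in> JJ \<Longrightarrow> is_lub_in UNIV (x ` I) m \<Longrightarrow> is_lub_in UNIV (\<psi> ` (x ` I)) (\<psi> m)" for \<psi> I x m
  proof -
    assume a: "\<psi> \<in> ?P" "I \<in> JJ" "is_lub_in UNIV (x ` I) m"
    then have "preserves_sup_idx I UNIV UNIV \<psi>" using cm[of \<psi>] Cm_sup by blast
    then have "is_lub_in UNIV ((\<lambda>i. \<psi> (x i)) ` I) (\<psi> m)" using a(3) unfolding preserves_sup_idx_def by blast
    then show ?thesis by (simp add: image_image)
  qed
  have C: "C_mor II JJ (UNIV::'a set) (Pow ?P) (bullet II JJ limL)"
    unfolding C_mor_def
  proof (intro conjI ballI allI impI)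
    show "bullet II JJ limL ` UNIV \<subseteq> Pow ?P" by (auto simp: bullet_def)
  next
    fix x y :: 'a assume "x \<le> y"
    show "bullet II JJ limL x \<le> bullet II JJ limL y"
    proof
      fix \<psi> assume a: "\<psi> \<in> bullet II JJ limL x"
      then have "\<psi> \<in> ?P" by (simp add: bullet_def)
      then have "\<psi> x \<le> \<psi> y" using mono \<open>x \<le> y\<close> by blast
      moreover have "\<psi> x = {()}" using a by (simp add: bullet_def)
      ultimately have "\<psi> y = UNIV" by (metis UNIV_unit top.extremum_uniqueI)
      then show "\<psi> \<in> bullet II JJ limL y" using \<open>\<psi> \<in> ?P\<close> by (simp add: bullet_def UNIV_unit)
    qed
  next
    fix S :: "'a set" and m assume "finite S" "is_glb_in UNIV S m"
    then have "\<forall>\<psi>\<in>?P. is_glb_in UNIV (\<psi> ` S) (\<psi> m)"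
      using fglb by blast
    then show "is_glb_in (Pow ?P) (bullet II JJ limL ` S) (bullet II JJ limL m)"
      unfolding bdef by (rule glb_lift)
  next
    fix S :: "'a set" and m assume "finite S" "is_lub_in UNIV S m"
    then have "\<forall>\<psi>\<in>?P. is_lub_in UNIV (\<psi> ` S) (\<psi> m)"
      using flub by blast
    then show "is_lub_in (Pow ?P) (bullet II JJ limL ` S) (bullet II JJ limL m)"
      unfolding bdef by (rule lub_lift)
  next
    fix I assume I: "I \<in> II"
    show "preserves_inf_idx I UNIV (Pow ?P) (bullet II JJ limL)"
      unfolding preserves_inf_idx_def
    proof (intro allI impI)
      fix x :: "'i \<Rightarrow> 'a" and m assume "is_glb_in UNIV (x ` I) m"
      then have "\<forall>\<psi>\<in>?P. is_glb_in UNIV (\<psi> ` (x ` I)) (\<psi> m)"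
        using iglb I by blast
      then have "is_glb_in (Pow ?P) ((\<lambda>l. {\<psi>\<in>?P. \<psi> l = {()}}) ` (x ` I)) {\<psi>\<in>?P. \<psi> m = {()}}"
        by (rule glb_lift)
      then show "is_glb_in (Pow ?P) ((\<lambda>i. bullet II JJ limL (x i)) ` I) (bullet II JJ limL m)"
        unfolding bdef by (simp add: image_image)
    qed
  next
    fix J assume J: "J \<in> JJ"
    show "preserves_sup_idx J UNIV (Pow ?P) (bullet II JJ limL)"
      unfolding preserves_sup_idx_def
    proof (intro allI impI)
      fix x :: "'j \<Rightarrow> 'a" and m assume "is_lub_in UNIV (x ` J) m"
      then have "\<forall>\<psi>\<in>?P. is_lub_in UNIV (\<psi> ` (x ` J)) (\<psi> m)"
        using ilub J by blast
      then have "is_lub_in (Pow ?P) ((\<lambda>l. {\<psi>\<in>?P. \<psi> l = {()}}) ` (x ` J)) {\<psi>\<in>?P. \<psi> m = {()}}"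
        by (rule lub_lift)
      then show "is_lub_in (Pow ?P) ((\<lambda>i. bullet II JJ limL (x i)) ` J) (bullet II JJ limL m)"
        unfolding bdef by (simp add: image_image)
    qed
  qed
  show ?thesis
    unfolding conv_mor_def using C by (simp add: lim_Ppt_def)
qed

end
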